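(* If $\eta$ is a probability measure, then $\int\varphi\,d\eta=\tau(\varphi)$ for each continuous function $\varphi:\mathbb{X}\to\mathbb{R}$.
   Context: $\mathbb{X}$ is a compact metric space. $(\xi_j)_{j\in\mathbb N}$ is a sequence of finitely additive outer probabilities on $\mathbb{X}$ (set functions on all subsets, values in $[0,1]$, finitely additive, $\xi_j(\mathbb{X})=1$). For $A\subset\mathbb{X}$, $\tau(A)=\limsup_{n\to\infty}\frac1n\sum_{j=0}^{n-1}\xi_j(A)$, and for a bounded measurable $\varphi$, $\tau(\varphi)=\limsup_{n\to\infty}\frac1n\sum_{j=0}^{n-1}\xi_j(\varphi)$ where $\xi_j(\varphi)=\int\varphi\,d\xi_j$. For $Y\subset\mathbb{X}$, $r>0$, $\nu_r(Y)=\inf\sum_{I\in\mathcal I}\tau(I)$ over countable covers $\mathcal I$ of $Y$ by open sets of diameter $\le r$; $\nu(Y)=\sup_{r>0}\nu_r(Y)$; $\eta$ is the restriction of $\nu$ to Borel sets. *)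

theory Defs
  imports "HOL-Analysis.Analysis" "HOL-Probability.Probability"
begin

text \<open>The compact metric space X is modelled as a type 'a::metric_space with
  compact UNIV. A sequence of finitely additive outer probabilities on X:\<close>

definition fa_outer_prob_seq :: "(nat \<Rightarrow> 'a set \<Rightarrow> real) \<Rightarrow> bool" where
  "fa_outer_prob_seq \<xi> \<longleftrightarrow>
     (\<forall>j A. 0 \<le> \<xi> j A \<and> \<xi> j A \<le> 1) \<and>
     (\<forall>j A B. A \<inter> B = {} \<longrightarrow> \<xi> j (A \<union> B) = \<xi> j A + \<xi> j B) \<and>
     (\<forall>j. \<xi> j UNIV = 1)"

text \<open>Integral of a bounded function against a finitely additive probability
  (limit of sums over level-set partitions of mesh 1/(n+1)).\<close>

definition fa_integral :: "('a set \<Rightarrow> real) \<Rightarrow> ('a \<Rightarrow> real) \<Rightarrow> real" where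
  "fa_integral \<mu> \<phi> = lim (\<lambda>n.
     \<Sum>k\<in>(\<lambda>x. \<lfloor>real (Suc n) * \<phi> x\<rfloor>) ` UNIV.
        of_int k / real (Suc n) * \<mu> {x. \<lfloor>real (Suc n) * \<phi> x\<rfloor> = k})"

text \<open>tau(A) = limsup (1/n) sum_{j<n} xi_j(A) (finite since values lie in [0,1]).\<close>

definition tau_set :: "(nat \<Rightarrow> 'a set \<Rightarrow> real) \<Rightarrow> 'a set \<Rightarrow> real" where
  "tau_set \<xi> A = real_of_ereal
     (limsup (\<lambda>n. ereal ((\<Sum>j<n. \<xi> j A) / real n)))"

definition tau_fun :: "(nat \<Rightarrow> 'a set \<Rightarrow> real) \<Rightarrow> ('a \<Rightarrow> real) \<Rightarrow> real" where
  "tau_fun \<xi> \<phi> = real_of_ereal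
     (limsup (\<lambda>n. ereal ((\<Sum>j<n. fa_integral (\<xi> j) \<phi>) / real n)))"

text \<open>nu_r: infimum over countable open covers with diameters \<le> r
  (countable families represented as sequences, padded with empty sets).\<close>

definition nu_r :: "(nat \<Rightarrow> 'a::metric_space set \<Rightarrow> real) \<Rightarrow> real \<Rightarrow> 'a set \<Rightarrow> ennreal" where
  "nu_r \<xi> r Y = (INF I \<in> {I :: nat \<Rightarrow> 'a set.
        (\<forall>n. open (I n) \<and> diameter (I n) \<le> r) \<and> Y \<subseteq> (\<Union>n. I n)}.
        (\<Sum>n. ennreal (tau_set \<xi> (I n))))"

definition nu :: "(nat \<Rightarrow> 'a::metric_space set \<Rightarrow> real) \<Rightarrow> 'a set \<Rightarrow> ennreal" where
  "nu \<xi> Y = (SUP r \<in> {0<..}. nu_r \<xi> r Y)"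

definition eta :: "(nat \<Rightarrow> 'a::metric_space set \<Rightarrow> real) \<Rightarrow> 'a measure" where
  "eta \<xi> = measure_of UNIV (sets borel) (nu \<xi>)"

definition eta_is_prob :: "(nat \<Rightarrow> 'a::metric_space set \<Rightarrow> real) \<Rightarrow> bool" where
  "eta_is_prob \<xi> \<longleftrightarrow> measure_space UNIV (sets borel) (nu \<xi>) \<and> nu \<xi> UNIV = 1"

end

theory Submission
  imports Defs
begin

lemma eta_sets: "sets (eta \<xi>) = sets borel"
  unfolding eta_def
  by (metis sets.sigma_sets_eq sets_measure_of sets.space_closed space_borel)

lemma eta_space: "space (eta \<xi>) = UNIV"
  unfolding eta_def by (simp add: space_measure_of_conv)

lemma eta_emeasure:
  assumes "eta_is_prob \<xi>" "A \<in> sets borel"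
  shows "emeasure (eta \<xi>) A = nu \<xi> A"
  unfolding eta_def
  by (rule emeasure_measure_of_sigma) (use assms in \<open>auto simp: eta_is_prob_def measure_space_def\<close>)

lemma eta_prob:
  assumes "eta_is_prob \<xi>"
  shows "prob_space (eta \<xi>)"
  by (rule prob_spaceI) (use assms in \<open>auto simp: eta_space eta_emeasure eta_is_prob_def\<close>)

locale fap =
  fixes \<mu> :: "'a set \<Rightarrow> real"
  assumes nonneg: "\<And>A. 0 \<le> \<mu> A"
    and add: "\<And>A B. A \<inter> B = {} \<Longrightarrow> \<mu> (A \<union> B) = \<mu> A + \<mu> B"
    and univ: "\<mu> UNIV = 1"
begin

lemma empty[simp]: "\<mu> {} = 0"
  using add[of "{}" "{}"] by simp

lemma mono: "A \<subseteq> B \<Longrightarrow> \<mu> A \<le> \<mu> B"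
  using add[of A "B - A"] nonneg[of "B - A"] by (simp add: Un_absorb1)

lemma subadd: "\<mu> (A \<union> B) \<le> \<mu> A + \<mu> B"
  using add[of A "B - A"] mono[of "B - A" B] by auto

lemma le1: "\<mu> A \<le> 1"
  using mono[of A UNIV] univ by simp

lemma finadd: "finite I \<Longrightarrow> disjoint_family_on A I \<Longrightarrow> \<mu> (\<Union>i\<in>I. A i) = (\<Sum>i\<in>I. \<mu> (A i))"
proof (induction I rule: finite_induct)
  case empty
  then show ?case by simp
next
  case (insert a I)
  have "disjoint_family_on A I" using insert.prems
    by (auto simp: disjoint_family_on_def)
  moreover have "A a \<inter> (\<Union>i\<in>I. A i) = {}" using insert.prems insert.hyps
    by (auto simp: disjoint_family_on_def)
  ultimately show ?case using insert by (simp add: add)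
qed

lemma partition:
  assumes "finite W" "\<And>x. p x \<in> W"
  shows "\<mu> A = (\<Sum>w\<in>W. \<mu> (A \<inter> {x. p x = w}))"
proof -
  have "A = (\<Union>w\<in>W. A \<inter> {x. p x = w})" using assms(2) by blast
  moreover have "disjoint_family_on (\<lambda>w. A \<inter> {x. p x = w}) W"
    by (auto simp: disjoint_family_on_def)
  ultimately show ?thesis using finadd[OF assms(1)] by metis
qed

definition ssum :: "('a \<Rightarrow> real) \<Rightarrow> real" where
  "ssum f = (\<Sum>v\<in>range f. v * \<mu> {x. f x = v})"

lemma ssum_factor:
  assumes "finite W" "\<And>x. p x \<in> W" "finite (range f)" "\<And>x. f x = c (p x)"
  shows "ssum f = (\<Sum>w\<in>W. c w * \<mu> {x. p x = w})"
proof -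
  have "ssum f = (\<Sum>v\<in>range f. \<Sum>w\<in>W. v * \<mu> ({x. f x = v} \<inter> {x. p x = w}))"
    unfolding ssum_def
    by (subst partition[OF assms(1,2)]) (simp add: sum_distrib_left)
  also have "\<dots> = (\<Sum>w\<in>W. \<Sum>v\<in>range f. v * \<mu> ({x. f x = v} \<inter> {x. p x = w}))"
    by (rule sum.swap)
  also have "\<dots> = (\<Sum>w\<in>W. c w * \<mu> {x. p x = w})"
  proof (rule sum.cong[OF refl])
    fix w assume "w \<in> W"
    show "(\<Sum>v\<in>range f. v * \<mu> ({x. f x = v} \<inter> {x. p x = w})) = c w * \<mu> {x. p x = w}"
    proof (cases "\<exists>x. p x = w")
      case True
      then obtain x0 where x0: "p x0 = w" by blast
      have "(\<Sum>v\<in>range f. v * \<mu> ({x. f x = v} \<inter> {x. p x = w}))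
          = (\<Sum>v\<in>range f. if v = c w then c w * \<mu> {x. p x = w} else 0)"
      proof (rule sum.cong[OF refl])
        fix v assume "v \<in> range f"
        show "v * \<mu> ({x. f x = v} \<inter> {x. p x = w}) = (if v = c w then c w * \<mu> {x. p x = w} else 0)"
        proof (cases "v = c w")
          case True
          then have "{x. f x = v} \<inter> {x. p x = w} = {x. p x = w}" using assms(4) by auto
          then show ?thesis using True by simp
        next
          case False
          then have "{x. f x = v} \<inter> {x. p x = w} = {}" using assms(4) by auto
          then show ?thesis using False by simp
        qed
      qed
      also have "\<dots> = c w * \<mu> {x. p x = w}"
        using assms(3,4) x0 by (subst sum.delta) (auto simp: image_iff)
      finally show ?thesis .
    next
      case False
      then have "{x. p x = w} = {}" by auto
      then show ?thesis by simp
    qed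
  qed
  finally show ?thesis .
qed


lemma sum_level: "(\<Sum>v\<in>range f. \<mu> {x. f x = v}) = 1" if "finite (range f)"
  using partition[OF that, of f UNIV] univ by simp

lemma ssum_lin:
  assumes "finite (range f)"
  shows "ssum (\<lambda>x. a + b * f x) = a + b * ssum f"
proof -
  have fr: "finite (range (\<lambda>x. a + b * f x))"
    using assms by (metis (no_types) finite_imageI image_image)
  have "ssum (\<lambda>x. a + b * f x) = (\<Sum>v\<in>range f. (a + b * v) * \<mu> {x. f x = v})"
    by (rule ssum_factor[OF assms]) (use fr in auto)
  also have "\<dots> = a * (\<Sum>v\<in>range f. \<mu> {x. f x = v}) + b * (\<Sum>v\<in>range f. v * \<mu> {x. f x = v})"
    by (simp add: algebra_simps sum.distrib sum_distrib_left)
  finally show ?thesis using sum_level[OF assms] by (simp add: ssum_def)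
qed

lemma ssum_plus:
  assumes "finite (range f)"
  shows "ssum (\<lambda>x. f x + a) = ssum f + a"
  using ssum_lin[OF assms, of a 1] by (simp add: add.commute)

lemma ssum_neg:
  assumes "finite (range f)"
  shows "ssum (\<lambda>x. - f x) = - ssum f"
  using ssum_lin[OF assms, of 0 "-1"] by simp

lemma ssum_const: "ssum (\<lambda>x. c) = c"
  using ssum_lin[of "\<lambda>x. 0" c 0] by (simp add: ssum_def)

lemma ssum_mono:
  assumes "finite (range f)" "finite (range g)" "\<And>x. f x \<le> g x"
  shows "ssum f \<le> ssum g"
proof -
  let ?W = "range f \<times> range g" and ?p = "\<lambda>x. (f x, g x)"
  have W: "finite ?W" "\<And>x. ?p x \<in> ?W" using assms by simp_all
  have "ssum f = (\<Sum>w\<in>?W. fst w * \<mu> {x. ?p x = w})"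
    by (rule ssum_factor[OF W assms(1)]) auto
  also have "\<dots> \<le> (\<Sum>w\<in>?W. snd w * \<mu> {x. ?p x = w})"
  proof (rule sum_mono)
    fix w assume "w \<in> ?W"
    show "fst w * \<mu> {x. ?p x = w} \<le> snd w * \<mu> {x. ?p x = w}"
    proof (cases "\<exists>x. ?p x = w")
      case True
      then obtain x where "?p x = w" by blast
      then have "fst w \<le> snd w" using assms(3)[of x] by auto
      then show ?thesis by (simp add: mult_right_mono nonneg)
    next
      case False
      then have "{x. ?p x = w} = {}" by auto
      then show ?thesis by simp
    qed
  qed
  also have "\<dots> = ssum g"
    by (rule ssum_factor[OF W assms(2), symmetric]) auto
  finally show ?thesis .
qed

lemma ssum_add:
  assumes "finite (range f)" "finite (range g)"
  shows "ssum (\<lambda>x. f x + g x) = ssum f + ssum g"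
proof -
  let ?W = "range f \<times> range g" and ?p = "\<lambda>x. (f x, g x)"
  have W: "finite ?W" "\<And>x. ?p x \<in> ?W" using assms by simp_all
  have fr: "finite (range (\<lambda>x. f x + g x))"
  proof (rule finite_subset[of _ "(\<lambda>w. fst w + snd w) ` ?W"])
    show "range (\<lambda>x. f x + g x) \<subseteq> (\<lambda>w. fst w + snd w) ` ?W"
    proof
      fix y assume "y \<in> range (\<lambda>x. f x + g x)"
      then obtain x where "y = f x + g x" by blast
      then show "y \<in> (\<lambda>w. fst w + snd w) ` ?W" using W(2)[of x] by force
    qed
  qed (use W in simp)
  have "ssum (\<lambda>x. f x + g x) = (\<Sum>w\<in>?W. (fst w + snd w) * \<mu> {x. ?p x = w})"
    by (rule ssum_factor[OF W fr]) auto
  also have "\<dots> = (\<Sum>w\<in>?W. fst w * \<mu> {x. ?p x = w}) + (\<Sum>w\<in>?W. snd w * \<mu> {x. ?p x = w})"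
    by (simp add: algebra_simps sum.distrib)
  also have "\<dots> = ssum f + ssum g"
  proof -
    have "ssum f = (\<Sum>w\<in>?W. fst w * \<mu> {x. ?p x = w})"
      by (rule ssum_factor[OF W assms(1)]) auto
    moreover have "ssum g = (\<Sum>w\<in>?W. snd w * \<mu> {x. ?p x = w})"
      by (rule ssum_factor[OF W assms(2)]) auto
    ultimately show ?thesis by simp
  qed
  finally show ?thesis .
qed

lemma ssum_indicator: "ssum (\<lambda>x. c * indicator A x) = c * \<mu> A"
proof -
  have W: "finite (UNIV::bool set)" "\<And>x. (x \<in> A) \<in> (UNIV::bool set)" by auto
  have fr: "finite (range (\<lambda>x. c * indicator A x :: real))"
    by (rule finite_subset[of _ "{0, c}"]) (auto simp: indicator_def)
  have "ssum (\<lambda>x. c * indicator A x) = (\<Sum>w\<in>UNIV. (if w then c else 0) * \<mu> {x. (x \<in> A) = w})"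
    by (rule ssum_factor[OF W fr]) (auto simp: indicator_def)
  also have "\<dots> = c * \<mu> A" by (simp add: UNIV_bool)
  finally show ?thesis .
qed

lemma fr_ind: "finite (range (\<lambda>x. c * indicator A x :: real))"
  by (rule finite_subset[of _ "{0, c}"]) (auto simp: indicator_def)

lemma ssum_sum_ind:
  assumes "finite K"
  shows "finite (range (\<lambda>x. \<Sum>k\<in>K. c k * indicator (F k) x :: real))
     \<and> ssum (\<lambda>x. \<Sum>k\<in>K. c k * indicator (F k) x) = (\<Sum>k\<in>K. c k * \<mu> (F k))"
  using assms
proof (induction K rule: finite_induct)
  case empty
  then show ?case using ssum_const[of 0] by simp
next
  case (insert a K)
  let ?g = "\<lambda>x. \<Sum>k\<in>K. c k * indicator (F k) x :: real"
  let ?h = "\<lambda>x. c a * indicator (F a) x :: real"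
  have eq: "(\<lambda>x. \<Sum>k\<in>insert a K. c k * indicator (F k) x :: real) = (\<lambda>x. ?h x + ?g x)"
    using insert.hyps by (intro ext) (rule sum.insert)
  have fg: "finite (range ?g)" using insert.IH by blast
  have fr: "finite (range (\<lambda>x. ?h x + ?g x))"
  proof (rule finite_subset[of _ "(\<lambda>w. fst w + snd w) ` (range ?h \<times> range ?g)"])
    show "range (\<lambda>x. ?h x + ?g x) \<subseteq> (\<lambda>w. fst w + snd w) ` (range ?h \<times> range ?g)"
    proof
      fix y assume "y \<in> range (\<lambda>x. ?h x + ?g x)"
      then obtain x where "y = ?h x + ?g x" by blast
      then show "y \<in> (\<lambda>w. fst w + snd w) ` (range ?h \<times> range ?g)"
        by (intro image_eqI[of _ _ "(?h x, ?g x)"]) auto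
    qed
  qed (intro finite_imageI finite_cartesian_product fr_ind fg)
  have "ssum (\<lambda>x. ?h x + ?g x) = c a * \<mu> (F a) + (\<Sum>k\<in>K. c k * \<mu> (F k))"
    using ssum_add[OF fr_ind fg] ssum_indicator insert.IH by simp
  moreover have "(\<Sum>k\<in>insert a K. c k * \<mu> (F k)) = c a * \<mu> (F a) + (\<Sum>k\<in>K. c k * \<mu> (F k))"
    using insert.hyps by (rule sum.insert)
  ultimately show ?case unfolding eq using fr by simp
qed


lemma fin_comp: "finite (range f) \<Longrightarrow> finite (range (\<lambda>x. g (f x)))"
proof -
  assume "finite (range f)"
  moreover have "range (\<lambda>x. g (f x)) = g ` range f" by auto
  ultimately show ?thesis by simp
qed

lemma fin_floor:
  assumes B: "\<And>x. \<bar>\<psi> x\<bar> \<le> B" and c: "0 \<le> c"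
  shows "finite (range (\<lambda>x. \<lfloor>c * \<psi> x\<rfloor>))"
proof (rule finite_subset[of _ "{\<lfloor>- (c * B)\<rfloor>..\<lfloor>c * B\<rfloor>}"])
  show "range (\<lambda>x. \<lfloor>c * \<psi> x\<rfloor>) \<subseteq> {\<lfloor>- (c * B)\<rfloor>..\<lfloor>c * B\<rfloor>}"
  proof
    fix y assume "y \<in> range (\<lambda>x. \<lfloor>c * \<psi> x\<rfloor>)"
    then obtain x where y: "y = \<lfloor>c * \<psi> x\<rfloor>" by blast
    have "- B \<le> \<psi> x" "\<psi> x \<le> B" using B[of x] by auto
    then have "c * (- B) \<le> c * \<psi> x" "c * \<psi> x \<le> c * B"
      using mult_left_mono[OF \<open>- B \<le> \<psi> x\<close> c] mult_left_mono[OF \<open>\<psi> x \<le> B\<close> c] by auto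
    then have "- (c * B) \<le> c * \<psi> x" "c * \<psi> x \<le> c * B" by auto
    then show "y \<in> {\<lfloor>- (c * B)\<rfloor>..\<lfloor>c * B\<rfloor>}" unfolding y
      by (auto intro: floor_mono)
  qed
qed simp

lemma small_zero:
  fixes d :: real
  assumes "\<And>n. \<bar>d\<bar> \<le> inverse (real (Suc n))"
  shows "d = 0"
proof (rule ccontr)
  assume "d \<noteq> 0"
  then have "0 < \<bar>d\<bar>" by simp
  then obtain n where "inverse (real (Suc n)) < \<bar>d\<bar>" using reals_Archimedean by blast
  then show False using assms[of n] by simp
qed

lemma fa_sandwich:
  assumes B: "\<And>x. \<bar>\<psi> x\<bar> \<le> B"
  defines "fl \<equiv> \<lambda>n x. of_int \<lfloor>real (Suc n) * \<psi> x\<rfloor> / real (Suc n)"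
  shows "\<And>n. finite (range (fl n))"
    and "\<And>n x. fl n x \<le> \<psi> x" and "\<And>n x. \<psi> x \<le> fl n x + inverse (real (Suc n))"
    and "\<And>h. finite (range h) \<Longrightarrow> (\<And>x. h x \<le> \<psi> x) \<Longrightarrow> ssum h \<le> fa_integral \<mu> \<psi>"
    and "\<And>h. finite (range h) \<Longrightarrow> (\<And>x. \<psi> x \<le> h x) \<Longrightarrow> fa_integral \<mu> \<psi> \<le> ssum h"
proof -
  have ff: "finite (range (\<lambda>x. \<lfloor>real (Suc n) * \<psi> x\<rfloor>))" for n
    by (rule fin_floor[OF B]) simp
  show flf: "finite (range (fl n))" for n
  proof -
    have "range (fl n) = (\<lambda>k. of_int k / real (Suc n)) ` range (\<lambda>x. \<lfloor>real (Suc n) * \<psi> x\<rfloor>)"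
      unfolding fl_def by auto
    then show ?thesis using ff[of n] by simp
  qed
  show fl1: "fl n x \<le> \<psi> x" for n x
  proof -
    have "of_int \<lfloor>real (Suc n) * \<psi> x\<rfloor> \<le> real (Suc n) * \<psi> x" by (rule of_int_floor_le)
    then show ?thesis unfolding fl_def by (simp add: divide_le_eq mult.commute)
  qed
  show fl2: "\<psi> x \<le> fl n x + inverse (real (Suc n))" for n x
  proof -
    have "real (Suc n) * \<psi> x \<le> of_int \<lfloor>real (Suc n) * \<psi> x\<rfloor> + 1"
      using real_of_int_floor_add_one_ge by (simp add: less_imp_le)
    then have "\<psi> x \<le> (of_int \<lfloor>real (Suc n) * \<psi> x\<rfloor> + 1) / real (Suc n)"
      by (simp add: le_divide_eq mult.commute)
    then show ?thesis unfolding fl_def by (simp add: divide_inverse algebra_simps)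
  qed
  define S where "S n = ssum (fl n)" for n
  have Sdef: "S n = (\<Sum>k\<in>(\<lambda>x. \<lfloor>real (Suc n) * \<psi> x\<rfloor>) ` UNIV.
        of_int k / real (Suc n) * \<mu> {x. \<lfloor>real (Suc n) * \<psi> x\<rfloor> = k})" for n
    unfolding S_def by (rule ssum_factor[OF ff _ flf, where c = "\<lambda>k. of_int k / real (Suc n)"]) (auto simp: fl_def)
  have fa: "fa_integral \<mu> \<psi> = lim S"
    unfolding fa_integral_def Sdef by simp
  have flp: "finite (range (\<lambda>x. fl m x + inverse (real (Suc m))))" for m
    by (rule fin_comp[OF flf])
  have key: "S n \<le> S m + inverse (real (Suc m))" for n m
  proof -
    have "ssum (fl n) \<le> ssum (\<lambda>x. fl m x + inverse (real (Suc m)))"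
      by (rule ssum_mono[OF flf flp], rule order_trans[OF fl1 fl2])
    then show ?thesis unfolding S_def using ssum_plus[OF flf] by simp
  qed
  have "Cauchy S"
  proof (rule metric_CauchyI)
    fix e :: real assume "0 < e"
    then obtain M where M: "inverse (real (Suc M)) < e" using reals_Archimedean by blast
    have "dist (S m) (S n) < e" if "m \<ge> M" "n \<ge> M" for m n
    proof -
      have a: "inverse (real (Suc m)) \<le> inverse (real (Suc M))"
        using that by (simp add: le_imp_inverse_le)
      have b: "inverse (real (Suc n)) \<le> inverse (real (Suc M))"
        using that by (simp add: le_imp_inverse_le)
      have "S m - S n \<le> inverse (real (Suc M))" "S n - S m \<le> inverse (real (Suc M))"
        using key[of m n] key[of n m] a b by linarith+
      then show ?thesis using M unfolding dist_real_def by linarith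
    qed
    then show "\<exists>M. \<forall>m\<ge>M. \<forall>n\<ge>M. dist (S m) (S n) < e" by blast
  qed
  then have lim: "S \<longlonglongrightarrow> fa_integral \<mu> \<psi>"
    unfolding fa using Cauchy_convergent convergent_LIMSEQ_iff by blast
  have lim2: "(\<lambda>n. S n + inverse (real (Suc n))) \<longlonglongrightarrow> fa_integral \<mu> \<psi>"
    using tendsto_add[OF lim LIMSEQ_inverse_real_of_nat] by simp
  show "ssum h \<le> fa_integral \<mu> \<psi>" if h: "finite (range h)" "\<And>x. h x \<le> \<psi> x" for h
  proof (rule LIMSEQ_le_const[OF lim2], intro exI allI impI)
    fix n
    have "ssum h \<le> ssum (\<lambda>x. fl n x + inverse (real (Suc n)))"
      by (rule ssum_mono[OF h(1) flp], rule order_trans[OF h(2) fl2])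
    then show "ssum h \<le> S n + inverse (real (Suc n))" unfolding S_def using ssum_plus[OF flf] by simp
  qed
  show "fa_integral \<mu> \<psi> \<le> ssum h" if h: "finite (range h)" "\<And>x. \<psi> x \<le> h x" for h
  proof (rule LIMSEQ_le_const2[OF lim], intro exI allI impI)
    fix n
    show "S n \<le> ssum h" unfolding S_def
      by (rule ssum_mono[OF flf h(1)], rule order_trans[OF fl1 h(2)])
  qed
qed

lemma fa_neg:
  assumes B: "\<And>x. \<bar>\<psi> x\<bar> \<le> B"
  shows "fa_integral \<mu> (\<lambda>x. - \<psi> x) = - fa_integral \<mu> \<psi>"
proof -
  define fl where "fl \<equiv> \<lambda>n x. of_int \<lfloor>real (Suc n) * \<psi> x\<rfloor> / real (Suc n)"
  have sw1: "finite (range (fl n))" for n unfolding fl_def by (rule fa_sandwich(1)[OF B])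
  have sw2: "fl n x \<le> \<psi> x" for n x unfolding fl_def by (rule fa_sandwich(2)[OF B])
  have sw3: "\<psi> x \<le> fl n x + inverse (real (Suc n))" for n x unfolding fl_def by (rule fa_sandwich(3)[OF B])
  note sw = sw1 sw2 sw3 fa_sandwich(4,5)[OF B]
  have B': "\<And>x. \<bar>- \<psi> x\<bar> \<le> B" using B by simp
  note sw' = fa_sandwich[OF B']
  have "\<bar>fa_integral \<mu> (\<lambda>x. - \<psi> x) - (- fa_integral \<mu> \<psi>)\<bar> \<le> inverse (real (Suc n))" for n
  proof -
    let ?i = "inverse (real (Suc n))"
    have f0: "finite (range (fl n))" by (rule sw(1))
    have f1: "finite (range (\<lambda>x. - fl n x))" by (rule fin_comp[OF f0])
    have f2: "finite (range (\<lambda>x. - fl n x + - ?i))" by (rule fin_comp[OF f0])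
    have f3: "finite (range (\<lambda>x. fl n x + ?i))" by (rule fin_comp[OF f0])
    have "fa_integral \<mu> (\<lambda>x. - \<psi> x) \<le> ssum (\<lambda>x. - fl n x)"
      by (rule sw'(5)[OF f1]) (simp add: sw(2))
    then have a: "fa_integral \<mu> (\<lambda>x. - \<psi> x) \<le> - ssum (fl n)"
      by (simp only: ssum_neg[OF f0])
    have "ssum (\<lambda>x. - fl n x + - ?i) \<le> fa_integral \<mu> (\<lambda>x. - \<psi> x)"
    proof (rule sw'(4)[OF f2])
      fix x
      have "\<psi> x \<le> fl n x + ?i" by (rule sw(3))
      then show "- fl n x + - ?i \<le> - \<psi> x" by linarith
    qed
    then have b: "- ssum (fl n) - ?i \<le> fa_integral \<mu> (\<lambda>x. - \<psi> x)"
      using ssum_plus[OF f1, of "- ?i"] ssum_neg[OF f0] by linarith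
    have c: "ssum (fl n) \<le> fa_integral \<mu> \<psi>" by (rule sw(4)[OF f0 sw(2)])
    have "fa_integral \<mu> \<psi> \<le> ssum (\<lambda>x. fl n x + ?i)" by (rule sw(5)[OF f3 sw(3)])
    then have d: "fa_integral \<mu> \<psi> \<le> ssum (fl n) + ?i" by (simp only: ssum_plus[OF f0])
    show ?thesis using a b c d by linarith
  qed
  then show ?thesis using small_zero[of "fa_integral \<mu> (\<lambda>x. - \<psi> x) - (- fa_integral \<mu> \<psi>)"] by simp
qed

lemma fa_upper:
  assumes B: "\<And>x. \<bar>\<psi> x\<bar> \<le> B"
  shows "fa_integral \<mu> \<psi> \<le> ssum (\<lambda>x. of_int \<lfloor>real (Suc n) * \<psi> x\<rfloor> / real (Suc n)) + inverse (real (Suc n))"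
proof -
  define fl where "fl \<equiv> \<lambda>n x. of_int \<lfloor>real (Suc n) * \<psi> x\<rfloor> / real (Suc n)"
  have sw1: "finite (range (fl n))" for n unfolding fl_def by (rule fa_sandwich(1)[OF B])
  have sw2: "fl n x \<le> \<psi> x" for n x unfolding fl_def by (rule fa_sandwich(2)[OF B])
  have sw3: "\<psi> x \<le> fl n x + inverse (real (Suc n))" for n x unfolding fl_def by (rule fa_sandwich(3)[OF B])
  note sw = sw1 sw2 sw3 fa_sandwich(4,5)[OF B]
  have f3: "finite (range (\<lambda>x. fl n x + inverse (real (Suc n))))" by (rule fin_comp[OF sw(1)])
  have "fa_integral \<mu> \<psi> \<le> ssum (\<lambda>x. fl n x + inverse (real (Suc n)))" by (rule sw(5)[OF f3 sw(3)])
  moreover have "ssum (\<lambda>x. fl n x + inverse (real (Suc n))) = ssum (fl n) + inverse (real (Suc n))"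
    by (rule ssum_plus[OF sw(1)])
  ultimately show ?thesis unfolding fl_def by linarith
qed

lemma fa_bound:
  assumes B: "\<And>x. \<bar>\<psi> x\<bar> \<le> B"
  shows "\<bar>fa_integral \<mu> \<psi>\<bar> \<le> B"
proof -
  have "ssum (\<lambda>x. - B) \<le> fa_integral \<mu> \<psi>"
    by (rule fa_sandwich(4)[OF B]) (simp, metis B abs_le_iff minus_le_iff)
  moreover have "fa_integral \<mu> \<psi> \<le> ssum (\<lambda>x. B)"
    by (rule fa_sandwich(5)[OF B]) (simp, metis B abs_le_iff minus_le_iff)
  ultimately show ?thesis by (simp add: ssum_const)
qed
end

lemma fap_xi: "fa_outer_prob_seq \<xi> \<Longrightarrow> fap (\<xi> j)"
  unfolding fa_outer_prob_seq_def fap_def by blast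

lemma ls_finite:
  fixes x :: "nat \<Rightarrow> real"
  assumes "\<And>n. \<bar>x n\<bar> \<le> C"
  shows "limsup (\<lambda>n. ereal (x n)) = ereal (real_of_ereal (limsup (\<lambda>n. ereal (x n))))"
proof -
  have "limsup (\<lambda>n. ereal (x n)) \<le> ereal C"
    by (rule Limsup_bounded) (use assms in \<open>auto simp: abs_le_iff\<close>)
  moreover have "ereal (- C) \<le> limsup (\<lambda>n. ereal (x n))"
  proof (rule le_Limsup[OF sequentially_bot], rule always_eventually, rule allI)
    fix n
    have "- x n \<le> C" using abs_le_D2[OF assms[of n]] .
    then show "ereal (- C) \<le> ereal (x n)" by simp
  qed
  ultimately show ?thesis by (cases "limsup (\<lambda>n. ereal (x n))") auto
qed

lemma ls_ev:
  fixes x :: "nat \<Rightarrow> real"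
  assumes "\<And>n. \<bar>x n\<bar> \<le> C" "0 < e"
  shows "eventually (\<lambda>n. x n < real_of_ereal (limsup (\<lambda>n. ereal (x n))) + e) sequentially"
proof -
  define L where "L = limsup (\<lambda>n. ereal (x n))"
  define r where "r = real_of_ereal L"
  have L: "L = ereal r" unfolding L_def r_def by (rule ls_finite[OF assms(1)])
  have A: "\<forall>y>L. eventually (\<lambda>n. y > ereal (x n)) sequentially"
    unfolding L_def by (rule Limsup_le_iff[THEN iffD1]) (rule order_refl)
  have B: "ereal (r + e) > L" using assms(2) unfolding L by simp
  have "eventually (\<lambda>n. ereal (r + e) > ereal (x n)) sequentially"
    using mp[OF spec[OF A, of "ereal (r + e)"] B] .
  then have "eventually (\<lambda>n. x n < r + e) sequentially" by (rule eventually_mono) simp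
  then show ?thesis unfolding r_def L_def .
qed

lemma ls_le:
  fixes x :: "nat \<Rightarrow> real"
  assumes "\<And>e. 0 < e \<Longrightarrow> eventually (\<lambda>n. x n \<le> c + e) sequentially"
  shows "limsup (\<lambda>n. ereal (x n)) \<le> ereal c"
  unfolding Limsup_le_iff
proof (intro allI impI)
  fix y assume y: "ereal c < y"
  show "eventually (\<lambda>n. y > ereal (x n)) sequentially"
  proof (cases y)
    case (real r)
    then have "0 < (r - c) / 2" using y by simp
    from assms[OF this] show ?thesis
    proof (rule eventually_mono)
      fix n assume "x n \<le> c + (r - c) / 2"
      moreover have "c < r" using real y by simp
      moreover have "c + (r - c) / 2 < r" using \<open>c < r\<close> by (simp add: field_simps)
      ultimately have "x n < r" by (meson le_less_trans)
      then show "y > ereal (x n)" using real by simp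
    qed
  next
    case PInf
    then show ?thesis by simp
  next
    case MInf
    then show ?thesis using y by simp
  qed
qed

lemma ls_ge:
  fixes x :: "nat \<Rightarrow> real"
  assumes "\<And>e. 0 < e \<Longrightarrow> eventually (\<lambda>n. c - e \<le> x n) sequentially"
  shows "ereal c \<le> limsup (\<lambda>n. ereal (x n))"
proof (rule ereal_le_epsilon2)
  fix e :: real assume "0 < e"
  have "ereal (c - e) \<le> limsup (\<lambda>n. ereal (x n))"
    by (rule le_Limsup[OF sequentially_bot]) (use assms[OF \<open>0 < e\<close>] in \<open>auto elim: eventually_mono\<close>)
  then show "ereal c \<le> limsup (\<lambda>n. ereal (x n)) + ereal e"
    by (cases "limsup (\<lambda>n. ereal (x n))") auto
qed

definition mavg :: "(nat \<Rightarrow> 'a set \<Rightarrow> real) \<Rightarrow> nat \<Rightarrow> 'a set \<Rightarrow> real" where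
  "mavg \<xi> n A = (\<Sum>j<n. \<xi> j A) / real n"

lemma tau_set_mavg: "tau_set \<xi> A = real_of_ereal (limsup (\<lambda>n. ereal (mavg \<xi> n A)))"
  unfolding tau_set_def mavg_def ..

lemma mavg_bound:
  assumes "fa_outer_prob_seq \<xi>"
  shows "0 \<le> mavg \<xi> n A" "mavg \<xi> n A \<le> 1"
proof -
  have b: "0 \<le> \<xi> j A" "\<xi> j A \<le> 1" for j
    using assms unfolding fa_outer_prob_seq_def by auto
  have "0 \<le> (\<Sum>j<n. \<xi> j A)" by (rule sum_nonneg) (use b in auto)
  then show "0 \<le> mavg \<xi> n A" unfolding mavg_def by simp
  have "(\<Sum>j<n. \<xi> j A) \<le> (\<Sum>j<n. 1)" by (rule sum_mono) (use b in auto)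
  then show "mavg \<xi> n A \<le> 1" unfolding mavg_def by (cases n) (auto simp: divide_le_eq)
qed

lemma mavg_abs: "fa_outer_prob_seq \<xi> \<Longrightarrow> \<bar>mavg \<xi> n A\<bar> \<le> 1"
  using mavg_bound[of \<xi> n A] by auto

lemma tau_ev:
  assumes "fa_outer_prob_seq \<xi>" "0 < e"
  shows "eventually (\<lambda>n. mavg \<xi> n A < tau_set \<xi> A + e) sequentially"
  unfolding tau_set_mavg by (rule ls_ev[OF mavg_abs[OF assms(1)] assms(2)])

lemma tau_le:
  assumes "fa_outer_prob_seq \<xi>" "\<And>e. 0 < e \<Longrightarrow> eventually (\<lambda>n. mavg \<xi> n A \<le> c + e) sequentially"
  shows "tau_set \<xi> A \<le> c"
proof -
  have "limsup (\<lambda>n. ereal (mavg \<xi> n A)) \<le> ereal c" by (rule ls_le[OF assms(2)])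
  moreover have "limsup (\<lambda>n. ereal (mavg \<xi> n A)) = ereal (real_of_ereal (limsup (\<lambda>n. ereal (mavg \<xi> n A))))"
    by (rule ls_finite[OF mavg_abs[OF assms(1)]])
  ultimately show ?thesis unfolding tau_set_mavg by (metis ereal_less_eq(3))
qed

lemma tau_nonneg:
  assumes "fa_outer_prob_seq \<xi>"
  shows "0 \<le> tau_set \<xi> A"
proof -
  have "ereal 0 \<le> limsup (\<lambda>n. ereal (mavg \<xi> n A))"
  proof (rule ls_ge, rule always_eventually, rule allI)
    fix e :: real and n assume "0 < e"
    then show "0 - e \<le> mavg \<xi> n A" using mavg_bound(1)[OF assms, of n A] by linarith
  qed
  moreover have "limsup (\<lambda>n. ereal (mavg \<xi> n A)) = ereal (real_of_ereal (limsup (\<lambda>n. ereal (mavg \<xi> n A))))"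
    by (rule ls_finite[OF mavg_abs[OF assms(1)]])
  ultimately show ?thesis unfolding tau_set_mavg by (metis ereal_less_eq(3))
qed

lemma tau_union:
  assumes xi: "fa_outer_prob_seq \<xi>"
  shows "tau_set \<xi> (A \<union> B) \<le> tau_set \<xi> A + tau_set \<xi> B"
proof (rule tau_le[OF xi])
  fix e :: real assume e: "0 < e"
  have "eventually (\<lambda>n. mavg \<xi> n A < tau_set \<xi> A + e/2 \<and> mavg \<xi> n B < tau_set \<xi> B + e/2) sequentially"
    using tau_ev[OF xi, of "e/2"] e by (auto intro: eventually_conj)
  then show "eventually (\<lambda>n. mavg \<xi> n (A \<union> B) \<le> tau_set \<xi> A + tau_set \<xi> B + e) sequentially"
  proof (rule eventually_mono)
    fix n assume n: "mavg \<xi> n A < tau_set \<xi> A + e/2 \<and> mavg \<xi> n B < tau_set \<xi> B + e/2"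
    have "(\<Sum>j<n. \<xi> j (A \<union> B)) \<le> (\<Sum>j<n. \<xi> j A + \<xi> j B)"
      by (rule sum_mono) (rule fap.subadd[OF fap_xi[OF xi]])
    then have "mavg \<xi> n (A \<union> B) \<le> mavg \<xi> n A + mavg \<xi> n B"
      unfolding mavg_def by (simp add: sum.distrib add_divide_distrib[symmetric] divide_right_mono)
    then show "mavg \<xi> n (A \<union> B) \<le> tau_set \<xi> A + tau_set \<xi> B + e" using n by linarith
  qed
qed

lemma tau_mono:
  assumes xi: "fa_outer_prob_seq \<xi>" and AB: "A \<subseteq> B"
  shows "tau_set \<xi> A \<le> tau_set \<xi> B"
proof (rule tau_le[OF xi])
  fix e :: real assume e: "0 < e"
  show "eventually (\<lambda>n. mavg \<xi> n A \<le> tau_set \<xi> B + e) sequentially"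
  proof (rule eventually_mono[OF tau_ev[OF xi e, of B]])
    fix n assume n: "mavg \<xi> n B < tau_set \<xi> B + e"
    have "(\<Sum>j<n. \<xi> j A) \<le> (\<Sum>j<n. \<xi> j B)"
      by (rule sum_mono) (rule fap.mono[OF fap_xi[OF xi] AB])
    then have "mavg \<xi> n A \<le> mavg \<xi> n B"
      unfolding mavg_def by (simp add: divide_right_mono)
    then show "mavg \<xi> n A \<le> tau_set \<xi> B + e" using n by linarith
  qed
qed

lemma tau_empty:
  assumes xi: "fa_outer_prob_seq \<xi>"
  shows "tau_set \<xi> {} = 0"
proof -
  have "tau_set \<xi> {} \<le> 0"
    by (rule tau_le[OF xi]) (simp add: mavg_def fap.empty[OF fap_xi[OF xi]])
  then show ?thesis using tau_nonneg[OF xi] by (meson order.antisym)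
qed

lemma tau_fin_union:
  assumes xi: "fa_outer_prob_seq \<xi>" and J: "finite J"
  shows "tau_set \<xi> (\<Union>i\<in>J. I i) \<le> (\<Sum>i\<in>J. tau_set \<xi> (I i))"
  using J
proof (induction J rule: finite_induct)
  case empty
  then show ?case using tau_empty[OF xi] by simp
next
  case (insert a J)
  have "tau_set \<xi> (\<Union>i\<in>insert a J. I i) = tau_set \<xi> (I a \<union> (\<Union>i\<in>J. I i))" by simp
  also have "\<dots> \<le> tau_set \<xi> (I a) + tau_set \<xi> (\<Union>i\<in>J. I i)" by (rule tau_union[OF xi])
  also have "\<dots> \<le> tau_set \<xi> (I a) + (\<Sum>i\<in>J. tau_set \<xi> (I i))" using insert.IH by simp
  also have "\<dots> = (\<Sum>i\<in>insert a J. tau_set \<xi> (I i))" using insert.hyps by simp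
  finally show ?case .
qed

lemma closed_nu:
  fixes \<xi> :: "nat \<Rightarrow> 'a::metric_space set \<Rightarrow> real"
  assumes cpt: "compact (UNIV :: 'a set)" and xi: "fa_outer_prob_seq \<xi>" and F: "closed F"
  shows "ennreal (tau_set \<xi> F) \<le> nu \<xi> F"
proof -
  have cF: "compact F" using compact_Int_closed[OF cpt F] by simp
  have "ennreal (tau_set \<xi> F) \<le> nu_r \<xi> 1 F"
    unfolding nu_r_def
  proof (rule INF_greatest)
    fix I assume "I \<in> {I :: nat \<Rightarrow> 'a set. (\<forall>n. open (I n) \<and> diameter (I n) \<le> 1) \<and> F \<subseteq> (\<Union>n. I n)}"
    then have op: "\<And>n. open (I n)" and cov: "F \<subseteq> (\<Union>n. I n)" by auto
    obtain J where J: "J \<subseteq> UNIV" "finite J" "F \<subseteq> (\<Union>n\<in>J. I n)"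
      using compactE_image[OF cF, of UNIV I] op cov by blast
    have "tau_set \<xi> F \<le> tau_set \<xi> (\<Union>n\<in>J. I n)" by (rule tau_mono[OF xi J(3)])
    also have "\<dots> \<le> (\<Sum>n\<in>J. tau_set \<xi> (I n))" by (rule tau_fin_union[OF xi J(2)])
    finally have "ennreal (tau_set \<xi> F) \<le> ennreal (\<Sum>n\<in>J. tau_set \<xi> (I n))" by (rule ennreal_leI)
    also have "\<dots> = (\<Sum>n\<in>J. ennreal (tau_set \<xi> (I n)))"
      by (rule sum_ennreal[symmetric]) (rule tau_nonneg[OF xi])
    also have "\<dots> \<le> (\<Sum>n. ennreal (tau_set \<xi> (I n)))"
      by (rule sum_le_suminf) (auto simp: J(2))
    finally show "ennreal (tau_set \<xi> F) \<le> (\<Sum>n. ennreal (tau_set \<xi> (I n)))" .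
  qed
  also have "\<dots> \<le> nu \<xi> F" unfolding nu_def by (rule SUP_upper) simp
  finally show ?thesis .
qed

lemma closed_measure:
  fixes \<xi> :: "nat \<Rightarrow> 'a::metric_space set \<Rightarrow> real"
  assumes cpt: "compact (UNIV :: 'a set)" and xi: "fa_outer_prob_seq \<xi>" and P: "eta_is_prob \<xi>"
    and F: "closed F"
  shows "tau_set \<xi> F \<le> measure (eta \<xi>) F"
proof -
  interpret prob_space "eta \<xi>" by (rule eta_prob[OF P])
  have Fb: "F \<in> sets borel" using F by simp
  have "ennreal (tau_set \<xi> F) \<le> emeasure (eta \<xi>) F"
    using closed_nu[OF cpt xi F] eta_emeasure[OF P Fb] by simp
  also have "\<dots> = ennreal (measure (eta \<xi>) F)" by (rule emeasure_eq_measure)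
  finally show ?thesis by (simp add: ennreal_le_iff)
qed


lemma eta_integrable:
  assumes P: "eta_is_prob \<xi>" and cont: "continuous_on UNIV \<psi>" and B: "\<And>x. \<bar>\<psi> x\<bar> \<le> B"
  shows "integrable (eta \<xi>) (\<psi> :: 'a::metric_space \<Rightarrow> real)"
proof -
  interpret prob_space "eta \<xi>" by (rule eta_prob[OF P])
  have e: "borel_measurable (eta \<xi>) = borel_measurable borel"
    by (rule measurable_cong_sets[OF eta_sets refl])
  have m: "\<psi> \<in> borel_measurable (eta \<xi>)"
    unfolding e by (rule borel_measurable_continuous_onI[OF cont])
  show ?thesis by (rule integrable_const_bound[where B = B]) (use B m in auto)
qed

lemma UB:
  fixes \<xi> :: "nat \<Rightarrow> 'a::metric_space set \<Rightarrow> real" and \<psi> :: "'a \<Rightarrow> real"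
  assumes cpt: "compact (UNIV :: 'a set)" and xi: "fa_outer_prob_seq \<xi>" and P: "eta_is_prob \<xi>"
    and cont: "continuous_on UNIV \<psi>" and B: "\<And>x. \<bar>\<psi> x\<bar> \<le> B" and e: "0 < e"
  shows "eventually (\<lambda>n. (\<Sum>j<n. fa_integral (\<xi> j) \<psi>) / real n < integral\<^sup>L (eta \<xi>) \<psi> + e) sequentially"
proof -
  interpret PS: prob_space "eta \<xi>" by (rule eta_prob[OF P])
  have "0 < e / 2" using e by simp
  then obtain n0 where n0: "inverse (real (Suc n0)) < e / 2" using reals_Archimedean by blast
  define N where "N = real (Suc n0)"
  have N1: "1 \<le> N" unfolding N_def by simp
  have Npos: "0 < N" unfolding N_def by simp
  have NB: "0 \<le> N" using Npos by simp
  define K0 where "K0 = \<lfloor>- (N * B)\<rfloor>"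
  define K1 where "K1 = \<lfloor>N * B\<rfloor>"
  define Ks where "Ks = {K0<..K1}"
  have Ksf: "finite Ks" unfolding Ks_def by simp
  define F where "F k = {x. k \<le> \<lfloor>N * \<psi> x\<rfloor>}" for k
  define g where "g x = (\<Sum>k\<in>Ks. (1 / N) * indicator (F k) x)" for x
  define fl where "fl x = of_int \<lfloor>N * \<psi> x\<rfloor> / N" for x
  have rng: "K0 \<le> \<lfloor>N * \<psi> x\<rfloor> \<and> \<lfloor>N * \<psi> x\<rfloor> \<le> K1" for x
  proof -
    have "- B \<le> \<psi> x" "\<psi> x \<le> B" using abs_le_D1[OF B[of x]] abs_le_D2[OF B[of x]] by auto
    then have "N * (- B) \<le> N * \<psi> x" "N * \<psi> x \<le> N * B"
      using mult_left_mono[OF \<open>- B \<le> \<psi> x\<close> NB] mult_left_mono[OF \<open>\<psi> x \<le> B\<close> NB] by auto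
    then show ?thesis unfolding K0_def K1_def by (auto intro: floor_mono)
  qed
  have flg: "fl x = of_int K0 / N + g x" for x
  proof -
    let ?m = "\<lfloor>N * \<psi> x\<rfloor>"
    have "(\<Sum>k\<in>Ks. indicator (F k) x :: real) = (\<Sum>k\<in>Ks. indicator {k. x \<in> F k} k)"
      by (simp add: indicator_def)
    also have "\<dots> = real (card (Ks \<inter> {k. x \<in> F k}))"
    proof -
      have "(\<Sum>k\<in>Ks. indicator {k. x \<in> F k} k :: real) = (\<Sum>k\<in>Ks. if k \<in> {k. x \<in> F k} then 1 else 0)"
        unfolding indicator_def of_bool_def ..
      also have "\<dots> = (\<Sum>k\<in>Ks \<inter> {k. x \<in> F k}. 1)"
        by (rule sum.inter_restrict[OF Ksf, symmetric])
      finally show ?thesis by simp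
    qed
    also have "Ks \<inter> {k. x \<in> F k} = {K0<..?m}"
      using rng[of x] unfolding Ks_def F_def by auto
    also have "real (card {K0<..?m}) = of_int (?m - K0)"
      using rng[of x] by simp
    finally have "(\<Sum>k\<in>Ks. indicator (F k) x :: real) = of_int (?m - K0)" .
    then have "g x = of_int (?m - K0) / N"
      unfolding g_def by (simp add: sum_divide_distrib[symmetric])
    then show ?thesis unfolding fl_def using Npos by (simp add: field_simps)
  qed
  have flg': "fl = (\<lambda>x. of_int K0 / N + g x)" by (rule ext) (rule flg)
  have closedF: "closed (F k)" for k
  proof -
    have "F k = {x. of_int k \<le> N * \<psi> x}" unfolding F_def by (simp add: le_floor_iff)
    moreover have "closed {x. of_int k \<le> N * \<psi> x}"
      by (rule closed_Collect_le) (intro continuous_intros cont)+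
    ultimately show ?thesis by simp
  qed
  have Fsets: "F k \<in> sets (eta \<xi>)" for k using closedF[of k] by (simp add: eta_sets)
  have perj: "fa_integral (\<xi> j) \<psi> \<le> of_int K0 / N + (\<Sum>k\<in>Ks. (1 / N) * \<xi> j (F k)) + 1 / N" for j
  proof -
    interpret fap "\<xi> j" by (rule fap_xi[OF xi])
    have up: "fa_integral (\<xi> j) \<psi> \<le> ssum fl + inverse N"
      using fa_upper[OF B, where n = n0] unfolding fl_def N_def .
    have sg: "finite (range g) \<and> ssum g = (\<Sum>k\<in>Ks. (1 / N) * \<xi> j (F k))"
      unfolding g_def by (rule ssum_sum_ind[OF Ksf])
    have "fl = (\<lambda>x. of_int K0 / N + 1 * g x)" using flg by auto
    moreover have "ssum (\<lambda>x. of_int K0 / N + 1 * g x) = of_int K0 / N + 1 * ssum g"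
      using sg by (intro ssum_lin) blast
    ultimately have "ssum fl = of_int K0 / N + 1 * ssum g" by simp
    then show ?thesis using up sg by (simp add: divide_inverse)
  qed
  have intg: "integrable (eta \<xi>) (\<lambda>x. (1 / N) * indicator (F k) x)" for k
    using Fsets[of k] by (intro Bochner_Integration.integrable_mult_right integrable_real_indicator) (auto simp: PS.emeasure_eq_measure)
  have int_fl: "integral\<^sup>L (eta \<xi>) fl = of_int K0 / N + (\<Sum>k\<in>Ks. (1 / N) * measure (eta \<xi>) (F k))"
  proof -
    have "integral\<^sup>L (eta \<xi>) fl = integral\<^sup>L (eta \<xi>) (\<lambda>x. of_int K0 / N + g x)" by (simp only: flg')
    also have "\<dots> = of_int K0 / N + integral\<^sup>L (eta \<xi>) g"
    proof -
      have ig: "integrable (eta \<xi>) g" unfolding g_def by (rule Bochner_Integration.integrable_sum) (rule intg)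
      have "integral\<^sup>L (eta \<xi>) (\<lambda>x. of_int K0 / N + g x) = integral\<^sup>L (eta \<xi>) (\<lambda>x. of_int K0 / N) + integral\<^sup>L (eta \<xi>) g"
        by (rule Bochner_Integration.integral_add[OF PS.integrable_const ig])
      then show ?thesis by (simp add: PS.prob_space)
    qed
    also have "integral\<^sup>L (eta \<xi>) g = (\<Sum>k\<in>Ks. integral\<^sup>L (eta \<xi>) (\<lambda>x. (1 / N) * indicator (F k) x))"
      unfolding g_def by (rule Bochner_Integration.integral_sum) (rule intg)
    also have "\<dots> = (\<Sum>k\<in>Ks. (1 / N) * measure (eta \<xi>) (F k))"
      by (rule sum.cong[OF refl]) (simp add: eta_space)
    finally show ?thesis .
  qed
  have int_le: "integral\<^sup>L (eta \<xi>) fl \<le> integral\<^sup>L (eta \<xi>) \<psi>"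
  proof (rule Bochner_Integration.integral_mono)
    show "integrable (eta \<xi>) fl" unfolding flg'
      by (rule Bochner_Integration.integrable_add[OF PS.integrable_const], unfold g_def, rule Bochner_Integration.integrable_sum, rule intg)
    show "integrable (eta \<xi>) \<psi>" by (rule eta_integrable[OF P cont B])
    show "fl x \<le> \<psi> x" for x
    proof -
      have "of_int \<lfloor>N * \<psi> x\<rfloor> \<le> N * \<psi> x" by (rule of_int_floor_le)
      then show ?thesis unfolding fl_def using Npos by (simp add: divide_le_eq mult.commute)
    qed
  qed
  define c where "c = real (card Ks)"
  define d where "d = e / (2 * (c + 1))"
  have c0: "0 \<le> c" unfolding c_def by simp
  have d0: "0 < d" unfolding d_def using e c0 by simp
  have cd: "c * d < e / 2"
  proof -
    have "c * d = (e / 2) * (c / (c + 1))" unfolding d_def using c0 by (simp add: field_simps)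
    also have "\<dots> < e / 2" using e c0 by (simp add: field_simps)
    finally show ?thesis .
  qed
  have ev1: "eventually (\<lambda>n. \<forall>k\<in>Ks. mavg \<xi> n (F k) < tau_set \<xi> (F k) + d) sequentially"
    by (rule eventually_ball_finite[OF Ksf]) (use tau_ev[OF xi d0] in blast)
  have ev2: "eventually (\<lambda>n. 0 < n) sequentially" by (rule eventually_gt_at_top)
  show ?thesis
  proof (rule eventually_mono[OF eventually_conj[OF ev1 ev2]])
    fix n :: nat assume H: "(\<forall>k\<in>Ks. mavg \<xi> n (F k) < tau_set \<xi> (F k) + d) \<and> 0 < n"
    then have npos: "0 < real n" by simp
    have "(\<Sum>j<n. fa_integral (\<xi> j) \<psi>) \<le> (\<Sum>j<n. of_int K0 / N + (\<Sum>k\<in>Ks. (1 / N) * \<xi> j (F k)) + 1 / N)"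
      by (rule sum_mono) (rule perj)
    also have "\<dots> = (\<Sum>j<n. (of_int K0 / N + 1 / N) + (\<Sum>k\<in>Ks. (1 / N) * \<xi> j (F k)))"
      by (rule sum.cong) auto
    also have "\<dots> = real n * (of_int K0 / N + 1 / N) + (\<Sum>j<n. \<Sum>k\<in>Ks. (1 / N) * \<xi> j (F k))"
      by (simp add: sum.distrib)
    also have "(\<Sum>j<n. \<Sum>k\<in>Ks. (1 / N) * \<xi> j (F k)) = (\<Sum>k\<in>Ks. (1 / N) * (\<Sum>j<n. \<xi> j (F k)))"
      by (subst sum.swap) (simp add: sum_distrib_left)
    finally have "(\<Sum>j<n. fa_integral (\<xi> j) \<psi>) / real n
        \<le> (real n * (of_int K0 / N + 1 / N) + (\<Sum>k\<in>Ks. (1 / N) * (\<Sum>j<n. \<xi> j (F k)))) / real n"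
      using npos by (simp add: divide_right_mono)
    also have "\<dots> = of_int K0 / N + 1 / N + (\<Sum>k\<in>Ks. (1 / N) * mavg \<xi> n (F k))"
      using npos by (simp add: add_divide_distrib sum_divide_distrib mavg_def mult.commute)
    also have "\<dots> \<le> of_int K0 / N + 1 / N + (\<Sum>k\<in>Ks. (1 / N) * (measure (eta \<xi>) (F k) + d))"
    proof -
      have "(\<Sum>k\<in>Ks. (1 / N) * mavg \<xi> n (F k)) \<le> (\<Sum>k\<in>Ks. (1 / N) * (measure (eta \<xi>) (F k) + d))"
      proof (rule sum_mono)
        fix k assume "k \<in> Ks"
        then have "mavg \<xi> n (F k) < tau_set \<xi> (F k) + d" using H by blast
        moreover have "tau_set \<xi> (F k) \<le> measure (eta \<xi>) (F k)"
          by (rule closed_measure[OF cpt xi P closedF])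
        ultimately have "mavg \<xi> n (F k) \<le> measure (eta \<xi>) (F k) + d" by linarith
        then show "(1 / N) * mavg \<xi> n (F k) \<le> (1 / N) * (measure (eta \<xi>) (F k) + d)"
          using Npos by (simp add: divide_right_mono)
      qed
      then show ?thesis by linarith
    qed
    also have "\<dots> = integral\<^sup>L (eta \<xi>) fl + 1 / N + c * d / N"
      unfolding int_fl c_def by (simp add: distrib_left sum.distrib)
    also have "\<dots> \<le> integral\<^sup>L (eta \<xi>) \<psi> + 1 / N + c * d"
    proof -
      have cd0: "0 \<le> c * d" using c0 d0 by simp
      have "c * d * 1 \<le> c * d * N" using mult_left_mono[OF N1 cd0] .
      then have "c * d / N \<le> c * d" using Npos by (simp add: divide_le_eq)
      then show ?thesis using int_le by linarith
    qed
    also have "\<dots> < integral\<^sup>L (eta \<xi>) \<psi> + e"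
    proof -
      have "1 / N < e / 2" using n0 unfolding N_def by (simp only: inverse_eq_divide)
      then show ?thesis using cd by linarith
    qed
    finally show "(\<Sum>j<n. fa_integral (\<xi> j) \<psi>) / real n < integral\<^sup>L (eta \<xi>) \<psi> + e" .
  qed
qed

theorem mainTheorem16:
  fixes \<xi> :: "nat \<Rightarrow> 'a::metric_space set \<Rightarrow> real"
    and \<phi> :: "'a \<Rightarrow> real"
  assumes "compact (UNIV :: 'a set)"
    and "fa_outer_prob_seq \<xi>"
    and "eta_is_prob \<xi>"
    and "continuous_on UNIV \<phi>"
  shows "integral\<^sup>L (eta \<xi>) \<phi> = tau_fun \<xi> \<phi>"
proof -
  note cpt = assms(1) and xi = assms(2) and P = assms(3) and cont = assms(4)
  have "compact (\<phi> ` UNIV)" by (rule compact_continuous_image[OF cont cpt])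
  then have "bounded (\<phi> ` UNIV)" by (rule compact_imp_bounded)
  then obtain B where B0: "\<forall>y\<in>\<phi> ` UNIV. norm y \<le> B" unfolding bounded_iff by blast
  have B: "\<bar>\<phi> x\<bar> \<le> B" for x using B0 by auto
  have B': "\<bar>- \<phi> x\<bar> \<le> B" for x using B[of x] by simp
  have cont': "continuous_on UNIV (\<lambda>x. - \<phi> x)" by (intro continuous_intros cont)
  define a where "a n = (\<Sum>j<n. fa_integral (\<xi> j) \<phi>) / real n" for n
  define I where "I = integral\<^sup>L (eta \<xi>) \<phi>"
  have up: "limsup (\<lambda>n. ereal (a n)) \<le> ereal I"
  proof (rule ls_le)
    fix e :: real assume "0 < e"
    from UB[OF cpt xi P cont B this] show "eventually (\<lambda>n. a n \<le> I + e) sequentially"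
      by (rule eventually_mono) (simp add: a_def I_def)
  qed
  have neg: "fa_integral (\<xi> j) (\<lambda>x. - \<phi> x) = - fa_integral (\<xi> j) \<phi>" for j
  proof -
    interpret fap "\<xi> j" by (rule fap_xi[OF xi])
    show ?thesis by (rule fa_neg[OF B])
  qed
  have lo: "ereal I \<le> limsup (\<lambda>n. ereal (a n))"
  proof (rule ls_ge)
    fix e :: real assume "0 < e"
    from UB[OF cpt xi P cont' B' this]
    show "eventually (\<lambda>n. I - e \<le> a n) sequentially"
    proof (rule eventually_mono)
      fix n
      assume "(\<Sum>j<n. fa_integral (\<xi> j) (\<lambda>x. - \<phi> x)) / real n < integral\<^sup>L (eta \<xi>) (\<lambda>x. - \<phi> x) + e"
      then have "- a n < - I + e"
        unfolding neg a_def I_def by (simp add: sum_negf)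
      then show "I - e \<le> a n" by linarith
    qed
  qed
  have "limsup (\<lambda>n. ereal (a n)) = ereal I" using up lo by (rule order.antisym)
  then show ?thesis unfolding tau_fun_def a_def I_def by simp
qed
end
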